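(* In the setting of the context, for every integer $m\ge2$ the inclusion $\Gamma(G_{m-1},S_{m-1})\hookrightarrow\Gamma(G_m,S_m)$ of Cayley graphs is an isometric embedding.
   Context: $H$ is a finitely presented group with finite generating set $T$, containing a free subgroup $F$ of rank $p$ with free basis $\{d_1,\dots,d_p\}\subset T$ (standing assumption: $\mathrm{Dist}_F^H$ admits an exponentially bounded sequence of palindromic certificates in $F$). $F_x,F_y,F_z$ are free of rank $p$ with bases $R_x=\{x_i\},R_y=\{y_i\},R_z=\{z_i\}$. $G_1=[H\ast_{\langle d_i=x_iy_i^{-1}\rangle}(F_x\times F_y\times F_z)]\times\langle s_1\rangle$; $a_i=x_iz_i$, $b_i=y_iz_i$, $R_{xz}=\{a_i\}$, $R_{yz}=\{b_i\}$; $G_2=\langle G_1,s_2\mid s_2^{-1}a_is_2=b_i,\ 1\le i\le p\rangle$; $G_m=\langle G_{m-1},s_m\mid s_m^{-1}s_1s_m=s_{m-1}\rangle$ for $m\ge3$. Generating sets: $S_1=T\cup R_x\cup R_y\cup R_z\cup R_{xz}\cup R_{yz}\cup\{s_1\}$ and $S_m=S_{m-1}\cup\{s_m\}$ for $m\ge2$. *)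

theory Defs
  imports Main
begin

text \<open>A word over an alphabet 'a is a list of letters (a, e); e = False means the
generator a, e = True means its inverse.\<close>

type_synonym 'a word = "('a \<times> bool) list"

definition letters :: "'a word \<Rightarrow> 'a set" where
  "letters w = fst ` set w"

definition inv_word :: "'a word \<Rightarrow> 'a word" where
  "inv_word w = rev (map (\<lambda>(a, e). (a, \<not> e)) w)"

definition pres_step :: "'a word set \<Rightarrow> 'a word \<Rightarrow> 'a word \<Rightarrow> bool" where
  "pres_step R u v \<longleftrightarrow>
     (\<exists>p q a e. u = p @ [(a, e), (a, \<not> e)] @ q \<and> v = p @ q) \<or>
     (\<exists>p q r. r \<in> R \<and> u = p @ r @ q \<and> v = p @ q)"

definition word_eq :: "'a word set \<Rightarrow> 'a word \<Rightarrow> 'a word \<Rightarrow> bool" where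
  "word_eq R = (\<lambda>u v. pres_step R u v \<or> pres_step R v u)\<^sup>*\<^sup>*"

text \<open>Distance in the Cayley graph Gamma(G, S) between the elements represented by the
words u and v: the word length over S of u^-1 v.\<close>

definition word_dist :: "'a set \<Rightarrow> 'a word set \<Rightarrow> 'a word \<Rightarrow> 'a word \<Rightarrow> nat" where
  "word_dist S R u v =
     (LEAST n. \<exists>w. letters w \<subseteq> S \<and> length w = n \<and> word_eq R w (inv_word u @ v))"

definition freely_reduced :: "'a word \<Rightarrow> bool" where
  "freely_reduced w \<longleftrightarrow>
     (\<forall>i. Suc i < length w \<longrightarrow> \<not> (fst (w ! i) = fst (w ! Suc i) \<and> snd (w ! i) \<noteq> snd (w ! Suc i)))"

definition free_basis :: "'t word set \<Rightarrow> nat \<Rightarrow> (nat \<Rightarrow> 't) \<Rightarrow> bool" where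
  "free_basis RH p d \<longleftrightarrow>
     (\<forall>w :: nat word. w \<noteq> [] \<longrightarrow> freely_reduced w \<longrightarrow> letters w \<subseteq> {..<p} \<longrightarrow>
        \<not> word_eq RH (map (\<lambda>(i, e). (d i, e)) w) [])"

text \<open>Generator labels: Tg t for t in T, Xg i = x_i, Yg i = y_i, Zg i = z_i,
Ag i = a_i, Bg i = b_i (indices i < p), Sg k = s_k (k \<ge> 1).\<close>

datatype 't gen = Tg 't | Xg nat | Yg nat | Zg nat | Ag nat | Bg nat | Sg nat

definition pos :: "'a \<Rightarrow> 'a \<times> bool" where "pos a = (a, False)"
definition ngt :: "'a \<Rightarrow> 'a \<times> bool" where "ngt a = (a, True)"

definition comm :: "'a \<Rightarrow> 'a \<Rightarrow> 'a word" where
  "comm a b = [pos a, pos b, ngt a, ngt b]"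

text \<open>Generators of the amalgamated product H *_F (F_x \<times> F_y \<times> F_z), together with a_i, b_i.\<close>

definition gens0 :: "'t set \<Rightarrow> nat \<Rightarrow> 't gen set" where
  "gens0 T p = Tg ` T \<union> Xg ` {..<p} \<union> Yg ` {..<p} \<union> Zg ` {..<p} \<union> Ag ` {..<p} \<union> Bg ` {..<p}"

fun gensG :: "'t set \<Rightarrow> nat \<Rightarrow> nat \<Rightarrow> 't gen set" where
  "gensG T p 0 = gens0 T p"
| "gensG T p (Suc 0) = gens0 T p \<union> {Sg 1}"
| "gensG T p (Suc (Suc k)) = gensG T p (Suc k) \<union> {Sg (Suc (Suc k))}"

text \<open>Relators of G_1 = [H *_{d_i = x_i y_i^-1} (F_x \<times> F_y \<times> F_z)] \<times> <s_1>,
with the defining relations a_i = x_i z_i and b_i = y_i z_i.\<close>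

definition rels1 :: "'t set \<Rightarrow> 't word set \<Rightarrow> nat \<Rightarrow> (nat \<Rightarrow> 't) \<Rightarrow> 't gen word set" where
  "rels1 T RH p d =
     map (\<lambda>(t, e). (Tg t, e)) ` RH
     \<union> {comm (Xg i) (Yg j) | i j. i < p \<and> j < p}
     \<union> {comm (Xg i) (Zg j) | i j. i < p \<and> j < p}
     \<union> {comm (Yg i) (Zg j) | i j. i < p \<and> j < p}
     \<union> {[pos (Tg (d i)), pos (Yg i), ngt (Xg i)] | i. i < p}
     \<union> {[pos (Ag i), ngt (Zg i), ngt (Xg i)] | i. i < p}
     \<union> {[pos (Bg i), ngt (Zg i), ngt (Yg i)] | i. i < p}
     \<union> {comm (Sg 1) g | g. g \<in> gens0 T p}"

fun relsG :: "'t set \<Rightarrow> 't word set \<Rightarrow> nat \<Rightarrow> (nat \<Rightarrow> 't) \<Rightarrow> nat \<Rightarrow> 't gen word set" where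
  "relsG T RH p d 0 = rels1 T RH p d"
| "relsG T RH p d (Suc 0) = rels1 T RH p d"
| "relsG T RH p d (Suc (Suc 0)) = relsG T RH p d (Suc 0)
     \<union> {[ngt (Sg 2), pos (Ag i), pos (Sg 2), ngt (Bg i)] | i. i < p}"
| "relsG T RH p d (Suc (Suc (Suc k))) = relsG T RH p d (Suc (Suc k))
     \<union> {[ngt (Sg (Suc (Suc (Suc k)))), pos (Sg 1), pos (Sg (Suc (Suc (Suc k)))), ngt (Sg (Suc (Suc k)))]}"

end

theory Submission
  imports Defs
begin

lemma word_eq_refl[simp]: "word_eq R u u"
  by (simp add: word_eq_def)

lemma word_eq_sym: "word_eq R u v \<Longrightarrow> word_eq R v u"
proof -
  have "symp (\<lambda>u v. pres_step R u v \<or> pres_step R v u)" by (auto intro: sympI)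
  then have "symp (\<lambda>u v. pres_step R u v \<or> pres_step R v u)\<^sup>*\<^sup>*" by (rule symp_rtranclp)
  then show "word_eq R u v \<Longrightarrow> word_eq R v u" unfolding word_eq_def by (rule sympD)
qed

lemma word_eq_trans: "word_eq R u v \<Longrightarrow> word_eq R v w \<Longrightarrow> word_eq R u w"
  unfolding word_eq_def by (rule rtranclp_trans)

lemma word_eq_step: "pres_step R u v \<Longrightarrow> word_eq R u v"
  unfolding word_eq_def by auto

lemma word_eq_cancel: "word_eq R (p @ [(a, e), (a, \<not> e)] @ q) (p @ q)"
  by (rule word_eq_step) (auto simp: pres_step_def)

lemma word_eq_rel: "r \<in> R \<Longrightarrow> word_eq R (p @ r @ q) (p @ q)"
  by (rule word_eq_step) (unfold pres_step_def, blast)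

lemma pres_step_cong: "pres_step R u v \<Longrightarrow> pres_step R (x @ u @ y) (x @ v @ y)"
  unfolding pres_step_def
  apply (elim disjE exE conjE)
   apply (rule disjI1) apply (rule_tac x="x@p" in exI, rule_tac x="q@y" in exI, auto)[1]
  apply (rule disjI2) apply (rule_tac x="x@p" in exI, rule_tac x="q@y" in exI, auto)[1]
  done

lemma word_eq_cong: "word_eq R u v \<Longrightarrow> word_eq R (x @ u @ y) (x @ v @ y)"
  unfolding word_eq_def
proof (induction rule: rtranclp_induct)
  case base then show ?case by simp
next
  case (step v w)
  then show ?case
    by (metis (no_types, lifting) pres_step_cong rtranclp.rtrancl_into_rtrancl)
qed

lemma word_eq_app: "word_eq R u v \<Longrightarrow> word_eq R u' v' \<Longrightarrow> word_eq R (u @ u') (v @ v')"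
  by (metis append_Nil append_Nil2 word_eq_cong word_eq_trans)

lemma word_eq_mono: "R \<subseteq> R' \<Longrightarrow> word_eq R u v \<Longrightarrow> word_eq R' u v"
  unfolding word_eq_def
  apply (erule rtranclp_mono[THEN predicate2D, rotated])
  unfolding pres_step_def by blast

lemma inv_word_Nil[simp]: "inv_word [] = []"
  by (simp add: inv_word_def)
lemma inv_word_Cons[simp]: "inv_word ((a,e) # w) = inv_word w @ [(a, \<not> e)]"
  by (simp add: inv_word_def)
lemma inv_word_append[simp]: "inv_word (u @ v) = inv_word v @ inv_word u"
  by (simp add: inv_word_def)
lemma inv_word_inv[simp]: "inv_word (inv_word w) = w"
  by (induction w) (auto simp: inv_word_def)
lemma length_inv_word[simp]: "length (inv_word w) = length w"
  by (simp add: inv_word_def)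
lemma letters_inv_word[simp]: "letters (inv_word w) = letters w"
  by (force simp: inv_word_def letters_def image_iff)

lemma word_eq_right_inv: "word_eq R (w @ inv_word w) []"
proof (induction w)
  case Nil then show ?case by simp
next
  case (Cons x w)
  obtain a e where x: "x = (a,e)" by (cases x)
  have "word_eq R ([(a,e)] @ (w @ inv_word w) @ [(a, \<not> e)]) ([(a,e)] @ [] @ [(a, \<not> e)])"
    by (rule word_eq_cong[OF Cons])
  moreover have "word_eq R ([] @ [(a,e),(a,\<not>e)] @ []) ([] @ [])" by (rule word_eq_cancel)
  ultimately show ?case using x by (auto intro: word_eq_trans)
qed

lemma word_eq_left_inv: "word_eq R (inv_word w @ w) []"
  using word_eq_right_inv[of R "inv_word w"] by simp

lemma word_eq_inv: "word_eq R u v \<Longrightarrow> word_eq R (inv_word u) (inv_word v)"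
proof -
  assume h: "word_eq R u v"
  have "word_eq R (inv_word u @ v @ inv_word v) (inv_word u @ u @ inv_word v)"
    by (rule word_eq_cong, rule word_eq_sym[OF h])
  moreover have "word_eq R (inv_word u @ v @ inv_word v) (inv_word u @ [])"
    using word_eq_cong[OF word_eq_right_inv[of R v], of "inv_word u" "[]"] by simp
  moreover have "word_eq R ((inv_word u @ u) @ inv_word v) ([] @ inv_word v)"
    using word_eq_cong[OF word_eq_left_inv[of R u], of "[]" "inv_word v"] by simp
  ultimately show ?thesis
    by (metis append.assoc append_Nil append_Nil2 word_eq_sym word_eq_trans)
qed

lemma word_eq_rel0: "r \<in> R \<Longrightarrow> word_eq R r []"
  using word_eq_rel[of r R "[]" "[]"] by simp

lemma letters_append[simp]: "letters (u @ v) = letters u \<union> letters v"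
  by (auto simp: letters_def)
lemma letters_Cons[simp]: "letters (x # v) = insert (fst x) (letters v)"
  by (auto simp: letters_def)
lemma letters_Nil[simp]: "letters [] = {}"
  by (auto simp: letters_def)

definition subst :: "('a \<Rightarrow> 'b word) \<Rightarrow> 'a word \<Rightarrow> 'b word" where
  "subst f w = concat (map (\<lambda>(x, e). if e then inv_word (f x) else f x) w)"

lemma subst_Nil[simp]: "subst f [] = []" by (simp add: subst_def)
lemma subst_Cons[simp]: "subst f ((x,e) # w) = (if e then inv_word (f x) else f x) @ subst f w"
  by (simp add: subst_def)
lemma subst_append[simp]: "subst f (u @ v) = subst f u @ subst f v"
  by (simp add: subst_def)
lemma subst_inv[simp]: "subst f (inv_word w) = inv_word (subst f w)"
  by (induction w) auto

lemma subst_word_eq: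
  assumes rel: "\<forall>r\<in>R. word_eq R' (subst f r) []"
    and h: "word_eq R u v"
  shows "word_eq R' (subst f u) (subst f v)"
proof -
  have stp: "word_eq R' (subst f u) (subst f v)" if "pres_step R u v" for u v
  proof -
    from that show ?thesis unfolding pres_step_def
    proof (elim disjE exE conjE)
      fix p q a e assume u: "u = p @ [(a, e), (a, \<not> e)] @ q" and v: "v = p @ q"
      have "word_eq R' (subst f p @ subst f [(a, e), (a, \<not> e)] @ subst f q) (subst f p @ [] @ subst f q)"
        by (rule word_eq_cong) (cases e; simp add: word_eq_right_inv word_eq_left_inv)
      then show ?thesis using u v by simp
    next
      fix p q r assume r: "r \<in> R" and u: "u = p @ r @ q" and v: "v = p @ q"
      show ?thesis using u v word_eq_cong[OF rel[rule_format, OF r], of "subst f p" "subst f q"] by simp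
    qed
  qed
  from h show ?thesis unfolding word_eq_def[of R]
  proof (induction rule: rtranclp_induct)
    case base then show ?case by simp
  next
    case (step v w)
    then show ?case using stp word_eq_sym word_eq_trans by blast
  qed
qed

definition act :: "('a \<times> bool \<Rightarrow> 'o \<Rightarrow> 'o) \<Rightarrow> 'a word \<Rightarrow> 'o \<Rightarrow> 'o" where
  "act F w \<omega> = foldr F w \<omega>"

lemma act_Nil[simp]: "act F [] \<omega> = \<omega>" by (simp add: act_def)
lemma act_Cons[simp]: "act F (x # w) \<omega> = F x (act F w \<omega>)" by (simp add: act_def)
lemma act_append[simp]: "act F (u @ v) \<omega> = act F u (act F v \<omega>)" by (simp add: act_def)

lemma act_valid:
  assumes "\<And>x \<omega>. V \<omega> \<Longrightarrow> V (F x \<omega>)" "V \<omega>"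
  shows "V (act F w \<omega>)"
  using assms by (induction w) auto

lemma act_word_eq:
  assumes V: "\<And>x \<omega>. V \<omega> \<Longrightarrow> V (F x \<omega>)"
    and C: "\<And>a e \<omega>. V \<omega> \<Longrightarrow> F (a, e) (F (a, \<not> e) \<omega>) = \<omega>"
    and Rl: "\<And>r \<omega>. r \<in> R \<Longrightarrow> V \<omega> \<Longrightarrow> act F r \<omega> = \<omega>"
    and h: "word_eq R u v"
  shows "\<forall>\<omega>. V \<omega> \<longrightarrow> act F u \<omega> = act F v \<omega>"
proof -
  have stp: "act F u \<omega> = act F v \<omega>" if "pres_step R u v" "V \<omega>" for u v \<omega>
  proof -
    from that(1) show ?thesis unfolding pres_step_def
    proof (elim disjE exE conjE)
      fix p q a e assume u: "u = p @ [(a, e), (a, \<not> e)] @ q" and v: "v = p @ q"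
      have "V (act F q \<omega>)" using act_valid[of V F, OF V that(2)] .
      then show ?thesis using u v C[of "act F q \<omega>" a e] by simp
    next
      fix p q r assume r: "r \<in> R" and u: "u = p @ r @ q" and v: "v = p @ q"
      have "V (act F q \<omega>)" using act_valid[of V F, OF V that(2)] .
      then show ?thesis using u v Rl[OF r] by simp
    qed
  qed
  from h show ?thesis unfolding word_eq_def[of R]
  proof (induction rule: rtranclp_induct)
    case base then show ?case by simp
  next
    case (step v w)
    then show ?case using stp by (metis (no_types, lifting))
  qed
qed

definition lift :: "('i \<Rightarrow> 'a) \<Rightarrow> 'i word \<Rightarrow> 'a word" where
  "lift X W = subst (\<lambda>i. [(X i, False)]) W"

lemma lift_Nil[simp]: "lift X [] = []" by (simp add: lift_def)
lemma lift_Cons[simp]: "lift X ((i,e) # W) = (X i, e) # lift X W"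
  by (simp add: lift_def)
lemma lift_append[simp]: "lift X (U @ W) = lift X U @ lift X W" by (simp add: lift_def)
lemma lift_inv[simp]: "lift X (inv_word W) = inv_word (lift X W)" by (simp add: lift_def)
lemma length_lift[simp]: "length (lift X W) = length W"
  by (induction W) auto
lemma letters_lift: "letters (lift X W) = X ` letters W"
  by (induction W) auto

lemma lift_word_eq: "word_eq {} U W \<Longrightarrow> word_eq R (lift X U) (lift X W)"
  unfolding lift_def by (rule subst_word_eq) auto

fun npl :: "'w \<Rightarrow> (bool \<times> 'w) list \<Rightarrow> bool" where
  "npl o1 [] = True"
| "npl o1 [x] = True"
| "npl o1 (x # y # L) = ((fst x \<noteq> fst y \<longrightarrow> snd x \<noteq> o1) \<and> npl o1 (y # L))"

lemma npl_tl: "npl o1 (x # L) \<Longrightarrow> npl o1 L"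
  by (cases L) auto

definition tcount :: "'a \<Rightarrow> 'a word \<Rightarrow> nat" where
  "tcount t w = length (filter (\<lambda>x. fst x = t) w)"

lemma tcount_Nil[simp]: "tcount t [] = 0" by (simp add: tcount_def)
lemma tcount_Cons[simp]: "tcount t (x # w) = (if fst x = t then Suc (tcount t w) else tcount t w)"
  by (simp add: tcount_def)
lemma tcount_append[simp]: "tcount t (u @ w) = tcount t u + tcount t w"
  by (simp add: tcount_def)
lemma tcount_zero: "tcount t w = 0 \<longleftrightarrow> t \<notin> letters w"
  by (induction w) auto

lemma first_t: "t \<in> letters w \<Longrightarrow> \<exists>c e w'. w = c @ (t, e) # w' \<and> t \<notin> letters c"
proof (induction w)
  case Nil then show ?case by simp
next
  case (Cons x w)
  obtain a b where x: "x = (a,b)" by (cases x)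
  show ?case
  proof (cases "a = t")
    case True then show ?thesis using x by (intro exI[of _ "[]"]) auto
  next
    case False
    then have "t \<in> letters w" using Cons.prems x by auto
    then obtain c e w' where "w = c @ (t, e) # w'" "t \<notin> letters c" using Cons.IH by blast
    then show ?thesis using x False by (intro exI[of _ "x # c"]) auto
  qed
qed

locale hnn =
  fixes R0 :: "'a word set" and S0 :: "'a set" and t :: 'a and I :: "'i set"
    and \<alpha> \<beta> :: "'i \<Rightarrow> 'a" and \<rho> :: "'a \<Rightarrow> 'i word"
  assumes t_notin: "t \<notin> S0"
    and t_rel: "\<forall>r\<in>R0. t \<notin> letters r"
    and ab_S0: "\<forall>i\<in>I. \<alpha> i \<in> S0 \<and> \<beta> i \<in> S0"
    and rho_a: "\<forall>i\<in>I. \<rho> (\<alpha> i) = [(i, False)]"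
    and rho_b: "\<forall>i\<in>I. \<rho> (\<beta> i) = [(i, False)]"
    and rho_rel: "\<forall>r\<in>R0. word_eq {} (subst \<rho> r) []"
    and rho_S0: "\<forall>x\<in>S0. length (\<rho> x) \<le> 1 \<and> letters (\<rho> x) \<subseteq> I"
begin

abbreviation E where "E \<equiv> word_eq R0"

definition R1 where "R1 = R0 \<union> {[(t, True), (\<alpha> i, False), (t, False), (\<beta> i, True)] | i. i \<in> I}"

definition canon :: "'a word \<Rightarrow> 'a word" where "canon w = (SOME v. E w v)"

lemma E_canon: "E w (canon w)"
  unfolding canon_def by (rule someI[of _ w]) simp

lemma canon_eq_iff: "canon u = canon v \<longleftrightarrow> E u v"
proof
  assume "canon u = canon v" then show "E u v"
    by (metis E_canon word_eq_sym word_eq_trans)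
next
  assume h: "E u v"
  have "E u = E v"
    using h by (intro ext iffI) (auto intro: word_eq_trans word_eq_sym)
  then show "canon u = canon v" unfolding canon_def
    by simp
qed

lemma canon_canon[simp]: "canon (canon w) = canon w"
  using E_canon canon_eq_iff word_eq_sym by blast

lemma canon_cong: "canon (p @ canon w @ q) = canon (p @ w @ q)"
  unfolding canon_eq_iff by (rule word_eq_cong, rule word_eq_sym, rule E_canon)

lemma canon_cong1: "canon (p @ canon w) = canon (p @ w)"
  using canon_cong[of p w "[]"] by simp
lemma canon_cong2: "canon (canon w @ q) = canon (w @ q)"
  using canon_cong[of "[]" w q] by simp
lemma canon_cong3: "canon (x # canon w) = canon (x # w)"
  using canon_cong1[of "[x]" w] by simp

definition one where "one = canon []"

definition sw :: "bool \<Rightarrow> 'i \<Rightarrow> 'a" where "sw e = (if e then \<alpha> else \<beta>)"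

definition inSub :: "('i \<Rightarrow> 'a) \<Rightarrow> 'a word \<Rightarrow> bool" where
  "inSub X h \<longleftrightarrow> (\<exists>W. letters W \<subseteq> I \<and> E h (lift X W))"

lemma inSub_E: "inSub X h \<Longrightarrow> E h h' \<Longrightarrow> inSub X h'"
  unfolding inSub_def by (meson word_eq_sym word_eq_trans)

lemma inSub_Nil[simp]: "inSub X []"
  unfolding inSub_def by (rule exI[of _ "[]"]) simp

lemma inSub_app: "inSub X u \<Longrightarrow> inSub X v \<Longrightarrow> inSub X (u @ v)"
  unfolding inSub_def
proof (elim exE conjE)
  fix U W assume "letters U \<subseteq> I" "E u (lift X U)" "letters W \<subseteq> I" "E v (lift X W)"
  then show "\<exists>W. letters W \<subseteq> I \<and> E (u @ v) (lift X W)"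
    by (intro exI[of _ "U @ W"]) (auto intro: word_eq_app)
qed

lemma inSub_inv: "inSub X u \<Longrightarrow> inSub X (inv_word u)"
  unfolding inSub_def
proof (elim exE conjE)
  fix U assume "letters U \<subseteq> I" "E u (lift X U)"
  then show "\<exists>W. letters W \<subseteq> I \<and> E (inv_word u) (lift X W)"
    by (intro exI[of _ "inv_word U"]) (auto intro: word_eq_inv)
qed

lemma inSub_lift: "letters W \<subseteq> I \<Longrightarrow> inSub X (lift X W)"
  unfolding inSub_def by auto

lemma inSub_canon: "inSub X (canon h) \<longleftrightarrow> inSub X h"
  by (meson E_canon inSub_E word_eq_sym)

lemma inSub_cancel: "inSub X (u @ v) \<Longrightarrow> inSub X u \<Longrightarrow> inSub X v"
proof -
  assume a: "inSub X (u @ v)" "inSub X u"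
  have "inSub X (inv_word u @ (u @ v))" by (rule inSub_app[OF inSub_inv[OF a(2)] a(1)])
  moreover have "E (inv_word u @ (u @ v)) v"
    using word_eq_cong[OF word_eq_left_inv[of R0 u], of "[]" v] by simp
  ultimately show ?thesis by (rule inSub_E)
qed

lemma inSub_cancel_r: "inSub X (u @ v) \<Longrightarrow> inSub X v \<Longrightarrow> inSub X u"
proof -
  assume a: "inSub X (u @ v)" "inSub X v"
  have "inSub X ((u @ v) @ inv_word v)" by (rule inSub_app[OF a(1) inSub_inv[OF a(2)]])
  moreover have "E ((u @ v) @ inv_word v) u"
    using word_eq_cong[OF word_eq_right_inv[of R0 v], of u "[]"] by simp
  ultimately show ?thesis by (rule inSub_E)
qed

abbreviation rs where "rs \<equiv> subst \<rho>"

lemma rho_E: "E u v \<Longrightarrow> word_eq {} (rs u) (rs v)"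
  by (rule subst_word_eq[OF rho_rel])

lemma rho_lift: "letters W \<subseteq> I \<Longrightarrow> rs (lift (sw e) W) = W"
proof (induction W)
  case Nil then show ?case by simp
next
  case (Cons x W)
  obtain i b where x: "x = (i,b)" by (cases x)
  then show ?case using Cons rho_a rho_b by (cases b; cases e) (auto simp: sw_def)
qed

lemma swap_lemma:
  assumes "E h (lift (sw e) W)" "letters W \<subseteq> I"
  shows "E (lift Y (rs h)) (lift Y W)"
proof -
  have "word_eq {} (rs h) (rs (lift (sw e) W))" by (rule rho_E[OF assms(1)])
  then have "word_eq {} (rs h) W" using rho_lift[OF assms(2)] by simp
  then show ?thesis by (rule lift_word_eq)
qed

lemma inSub_swap:
  assumes "inSub (sw e) h"
  shows "inSub (sw e') (lift (sw e') (rs h))" "E (lift (sw e) (rs h)) h"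
proof -
  obtain W where W: "letters W \<subseteq> I" "E h (lift (sw e) W)" using assms unfolding inSub_def by blast
  have a: "E (lift (sw e') (rs h)) (lift (sw e') W)" by (rule swap_lemma[OF W(2) W(1)])
  then show "inSub (sw e') (lift (sw e') (rs h))" using W(1) inSub_E inSub_lift word_eq_sym by blast
  have "E (lift (sw e) (rs h)) (lift (sw e) W)" by (rule swap_lemma[OF W(2) W(1)])
  then show "E (lift (sw e) (rs h)) h" using W(2) word_eq_sym word_eq_trans by blast
qed

definition rep :: "('i \<Rightarrow> 'a) \<Rightarrow> 'a word \<Rightarrow> 'a word" where
  "rep X h = (if inSub X h then one else canon (SOME r. inSub X (h @ inv_word r)))"

lemma rep_coset: "inSub X (h @ inv_word (rep X h))"
proof (cases "inSub X h")
  case True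
  have "E (h @ inv_word one) (h @ [])" unfolding one_def
    using word_eq_cong[OF word_eq_inv[OF word_eq_sym[OF E_canon[of "[]"]]], of h "[]"] by simp
  then show ?thesis using True by (simp add: rep_def) (metis inSub_E word_eq_sym append_Nil2)
next
  case False
  let ?r = "SOME r. inSub X (h @ inv_word r)"
  have ex: "inSub X (h @ inv_word h)" using word_eq_right_inv inSub_E word_eq_sym inSub_Nil by blast
  have "inSub X (h @ inv_word ?r)" by (rule someI[of _ h], rule ex)
  moreover have "E (h @ inv_word ?r) (h @ inv_word (canon ?r))"
    using word_eq_cong[OF word_eq_inv[OF E_canon[of ?r]], of h "[]"] by simp
  ultimately show ?thesis using False by (simp add: rep_def) (rule inSub_E)
qed

lemma rep_same:
  assumes "inSub X (h @ inv_word h')"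
  shows "rep X h = rep X h'"
proof -
  have iff: "inSub X h \<longleftrightarrow> inSub X h'"
  proof
    assume "inSub X h"
    then have "inSub X (h @ (inv_word h' @ h'))"
      using inSub_E word_eq_sym word_eq_cong[OF word_eq_left_inv[of R0 h'], of h "[]"] by fastforce
    then have "inSub X ((h @ inv_word h') @ h')" by simp
    then show "inSub X h'" using inSub_cancel assms by blast
  next
    assume "inSub X h'"
    then have "inSub X ((h @ inv_word h') @ h')" using inSub_app assms by blast
    moreover have "E ((h @ inv_word h') @ h') h"
      using word_eq_cong[OF word_eq_left_inv[of R0 h'], of h "[]"] by simp
    ultimately show "inSub X h" using inSub_E by blast
  qed
  have "\<And>r. inSub X (h @ inv_word r) \<longleftrightarrow> inSub X (h' @ inv_word r)"
  proof -
    fix r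
    have "E (inv_word (h @ inv_word h') @ (h @ inv_word r)) (h' @ inv_word r)"
    proof -
      have "inv_word (h @ inv_word h') @ (h @ inv_word r) = h' @ (inv_word h @ h) @ inv_word r" by simp
      moreover have "E (h' @ (inv_word h @ h) @ inv_word r) (h' @ [] @ inv_word r)"
        by (rule word_eq_cong, rule word_eq_left_inv)
      ultimately show ?thesis by simp
    qed
    moreover have "E ((h @ inv_word h') @ (h' @ inv_word r)) (h @ inv_word r)"
    proof -
      have "(h @ inv_word h') @ (h' @ inv_word r) = h @ (inv_word h' @ h') @ inv_word r" by simp
      moreover have "E (h @ (inv_word h' @ h') @ inv_word r) (h @ [] @ inv_word r)"
        by (rule word_eq_cong, rule word_eq_left_inv)
      ultimately show ?thesis by simp
    qed
    ultimately show "inSub X (h @ inv_word r) \<longleftrightarrow> inSub X (h' @ inv_word r)"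
      using assms inSub_app inSub_inv inSub_E by metis
  qed
  then show ?thesis using iff unfolding rep_def by simp
qed

lemma rep_canon: "canon (rep X h) = rep X h"
  unfolding rep_def one_def by simp

lemma rep_rep: "rep X (rep X h) = rep X h"
proof -
  have "inSub X (rep X h @ inv_word h)"
    using inSub_inv[OF rep_coset[of X h]] by simp
  then show ?thesis by (rule rep_same)
qed

lemma rep_one_iff: "rep X h = one \<longleftrightarrow> inSub X h"
proof
  assume a: "rep X h = one"
  have "inSub X (h @ inv_word one)" using rep_coset[of X h] a by simp
  moreover have "inSub X one" unfolding one_def using inSub_canon inSub_Nil by blast
  ultimately show "inSub X h" by (rule inSub_cancel_r[OF _ inSub_inv])
next
  assume "inSub X h" then show "rep X h = one" by (simp add: rep_def)
qed

lemma rep_mult: "inSub X a \<Longrightarrow> rep X (a @ g) = rep X g"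
proof -
  assume a: "inSub X a"
  have "E (a @ g @ inv_word g) (a @ [])"
    using word_eq_cong[OF word_eq_right_inv[of R0 g], of a "[]"] by simp
  then have "inSub X (a @ g @ inv_word g)" using a inSub_E word_eq_sym by (metis append_Nil2)
  then show ?thesis using rep_same by (metis append.assoc)
qed

end

lemma E_Cons: "word_eq R u v \<Longrightarrow> word_eq R (x # u) (x # v)"
  using word_eq_cong[of R u v "[x]" "[]"] by simp
lemma E_appr: "word_eq R u v \<Longrightarrow> word_eq R (u @ q) (v @ q)"
  using word_eq_cong[of R u v "[]" q] by simp
lemma E_appl: "word_eq R u v \<Longrightarrow> word_eq R (p @ u) (p @ v)"
  using word_eq_cong[of R u v p "[]"] by simp
lemma E_cancel_r: "word_eq R (u @ inv_word r @ r) u"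
  using word_eq_cong[OF word_eq_left_inv[of R r], of u "[]"] by simp
lemma E_cancel_r2: "word_eq R (u @ r @ inv_word r) u"
  using word_eq_cong[OF word_eq_right_inv[of R r], of u "[]"] by simp
lemma E_cancel_2: "word_eq R ((a, e) # (a, \<not> e) # u) u"
  using word_eq_cancel[of R "[]" a e u] by simp

context hnn begin

lemma lrs_E: "E u v \<Longrightarrow> E (lift Z (rs u)) (lift Z (rs v))"
  by (rule lift_word_eq, rule rho_E)

lemma back_lem: "inSub (sw e) h \<Longrightarrow> E (lift (sw e) (rs (lift (sw e') (rs h)))) h"
proof -
  assume "inSub (sw e) h"
  then obtain W where W: "letters W \<subseteq> I" "E h (lift (sw e) W)" unfolding inSub_def by blast
  have "E (lift (sw e') (rs h)) (lift (sw e') W)" by (rule swap_lemma[OF W(2) W(1)])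
  then have "E (lift (sw e) (rs (lift (sw e') (rs h)))) (lift (sw e) (rs (lift (sw e') W)))"
    by (rule lrs_E)
  then have "E (lift (sw e) (rs (lift (sw e') (rs h)))) (lift (sw e) W)"
    using rho_lift[OF W(1)] by simp
  then show ?thesis using W(2) word_eq_sym word_eq_trans by blast
qed

lemma rep_canon_arg: "rep X (canon h) = rep X h"
proof -
  have "E (canon h @ inv_word h) (h @ inv_word h)" by (rule E_appr, rule word_eq_sym, rule E_canon)
  then have "E (canon h @ inv_word h) []" using word_eq_right_inv word_eq_trans by blast
  then have "inSub X (canon h @ inv_word h)" using inSub_E inSub_Nil word_eq_sym by blast
  then show ?thesis by (rule rep_same)
qed

lemma inSub_one: "inSub X one"
  unfolding one_def using inSub_canon inSub_Nil by blast


definition tact :: "bool \<Rightarrow> 'a word \<times> (bool \<times> 'a word) list \<Rightarrow> 'a word \<times> (bool \<times> 'a word) list" where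
  "tact e \<omega> = (let h = fst \<omega>; L = snd \<omega>; r = rep (sw e) h in
     if r = one \<and> L \<noteq> [] \<and> fst (hd L) = (\<not> e)
     then (canon (lift (sw (\<not> e)) (rs h) @ snd (hd L)), tl L)
     else (canon (lift (sw (\<not> e)) (rs (h @ inv_word r))), (e, r) # L))"

definition valid :: "'a word \<times> (bool \<times> 'a word) list \<Rightarrow> bool" where
  "valid \<omega> \<longleftrightarrow> canon (fst \<omega>) = fst \<omega> \<and> (\<forall>x\<in>set (snd \<omega>). rep (sw (fst x)) (snd x) = snd x)
      \<and> npl one (snd \<omega>)"

lemma tact_cancel:
  assumes "rep (sw e) h = one" "L = (\<not> e, g) # L'"
  shows "tact e (h, L) = (canon (lift (sw (\<not> e)) (rs h) @ g), L')"
  using assms by (simp add: tact_def Let_def)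

lemma tact_nocancel:
  assumes "\<not> (rep (sw e) h = one \<and> L \<noteq> [] \<and> fst (hd L) = (\<not> e))"
  shows "tact e (h, L) = (canon (lift (sw (\<not> e)) (rs (h @ inv_word (rep (sw e) h)))), (e, rep (sw e) h) # L)"
  unfolding tact_def Let_def fst_conv snd_conv by (rule if_not_P[OF assms])

lemma valid_tact: "valid \<omega> \<Longrightarrow> valid (tact e \<omega>)"
proof -
  assume v: "valid \<omega>"
  obtain h L where \<omega>: "\<omega> = (h, L)" by (cases \<omega>)
  show ?thesis
  proof (cases "rep (sw e) h = one \<and> L \<noteq> [] \<and> fst (hd L) = (\<not> e)")
    case True
    then obtain g L' where L: "L = (\<not> e, g) # L'" by (cases L) auto
    show ?thesis using v \<omega> L True tact_cancel[of e h L g L'] by (auto simp: valid_def dest: npl_tl)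
  next
    case False
    have "npl one ((e, rep (sw e) h) # L)"
    proof (cases L)
      case Nil then show ?thesis by simp
    next
      case (Cons y L'')
      then show ?thesis using False v \<omega> by (cases y) (auto simp: valid_def)
    qed
    then show ?thesis using v \<omega> False tact_nocancel[OF False] by (auto simp: valid_def rep_rep)
  qed
qed

lemma tact_inv: "valid \<omega> \<Longrightarrow> tact (\<not> e) (tact e \<omega>) = \<omega>"
proof -
  assume v: "valid \<omega>"
  obtain h L where \<omega>: "\<omega> = (h, L)" by (cases \<omega>)
  have hc: "canon h = h" using v \<omega> by (simp add: valid_def)
  show ?thesis
  proof (cases "rep (sw e) h = one \<and> L \<noteq> [] \<and> fst (hd L) = (\<not> e)")
    case True
    then obtain g L' where L: "L = (\<not> e, g) # L'" by (cases L) auto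
    have hX: "inSub (sw e) h" using True rep_one_iff by blast
    let ?h' = "canon (lift (sw (\<not> e)) (rs h) @ g)"
    have t1: "tact e (h, L) = (?h', L')" using tact_cancel[of e h L g L'] True L by simp
    have gY: "rep (sw (\<not> e)) g = g" using v \<omega> L by (simp add: valid_def)
    have "rep (sw (\<not> e)) ?h' = rep (sw (\<not> e)) g"
      using rep_canon_arg rep_mult inSub_swap(1)[OF hX] by metis
    then have rh': "rep (sw (\<not> e)) ?h' = g" using gY by simp
    have nc: "\<not> (g = one \<and> L' \<noteq> [] \<and> fst (hd L') = e)"
      using v \<omega> L by (cases L') (auto simp: valid_def)
    have t2: "tact (\<not> e) (?h', L') = (canon (lift (sw e) (rs (?h' @ inv_word g))), (\<not> e, g) # L')"
      using tact_nocancel[of "\<not> e" ?h' L'] rh' nc by simp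
    have "E (?h' @ inv_word g) (lift (sw (\<not> e)) (rs h))"
      using E_appr[OF word_eq_sym[OF E_canon]] E_cancel_r2 word_eq_trans by (metis append.assoc)
    then have "E (lift (sw e) (rs (?h' @ inv_word g))) (lift (sw e) (rs (lift (sw (\<not> e)) (rs h))))"
      by (rule lrs_E)
    then have "E (lift (sw e) (rs (?h' @ inv_word g))) h" using back_lem[OF hX] word_eq_trans by blast
    then have "canon (lift (sw e) (rs (?h' @ inv_word g))) = h" using hc canon_eq_iff by metis
    then show ?thesis using \<omega> t1 t2 L by simp
  next
    case False
    let ?r = "rep (sw e) h"
    let ?h'' = "canon (lift (sw (\<not> e)) (rs (h @ inv_word ?r)))"
    have t1: "tact e (h, L) = (?h'', (e, ?r) # L)" by (rule tact_nocancel[OF False])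
    have c: "inSub (sw e) (h @ inv_word ?r)" by (rule rep_coset)
    have "inSub (sw (\<not> e)) ?h''" using inSub_swap(1)[OF c] inSub_canon by blast
    then have "rep (sw (\<not> e)) ?h'' = one" using rep_one_iff by blast
    then have t2: "tact (\<not> e) (?h'', (e, ?r) # L) = (canon (lift (sw e) (rs ?h'') @ ?r), L)"
      using tact_cancel[of "\<not> e" ?h'' "(e, ?r) # L" ?r L] by simp
    have "E (lift (sw e) (rs ?h'')) (lift (sw e) (rs (lift (sw (\<not> e)) (rs (h @ inv_word ?r)))))"
      by (rule lrs_E, rule word_eq_sym, rule E_canon)
    then have "E (lift (sw e) (rs ?h'')) (h @ inv_word ?r)" using back_lem[OF c] word_eq_trans by blast
    then have "E (lift (sw e) (rs ?h'') @ ?r) ((h @ inv_word ?r) @ ?r)" by (rule E_appr)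
    then have "E (lift (sw e) (rs ?h'') @ ?r) h" using E_cancel_r word_eq_trans by (metis append.assoc)
    then have "canon (lift (sw e) (rs ?h'') @ ?r) = h" using hc canon_eq_iff by metis
    then show ?thesis using \<omega> t1 t2 by simp
  qed
qed

end

context hnn begin

definition Fa :: "'a \<times> bool \<Rightarrow> 'a word \<times> (bool \<times> 'a word) list \<Rightarrow> 'a word \<times> (bool \<times> 'a word) list" where
  "Fa x \<omega> = (if fst x = t then tact (snd x) \<omega> else (canon (x # fst \<omega>), snd \<omega>))"

lemma valid_Fa: "valid \<omega> \<Longrightarrow> valid (Fa x \<omega>)"
  by (auto simp: Fa_def valid_tact) (auto simp: valid_def)

lemma Fa_cancel: "valid \<omega> \<Longrightarrow> Fa (a, e) (Fa (a, \<not> e) \<omega>) = \<omega>"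
proof (cases "a = t")
  case True
  assume v: "valid \<omega>"
  show ?thesis using True tact_inv[OF v, of "\<not> e"] by (simp add: Fa_def)
next
  case False
  assume v: "valid \<omega>"
  have "canon ((a, e) # canon ((a, \<not> e) # fst \<omega>)) = canon (fst \<omega>)"
    unfolding canon_cong3 canon_eq_iff by (rule E_cancel_2)
  then show ?thesis using False v by (simp add: Fa_def valid_def)
qed

lemma act_tfree: "t \<notin> letters w \<Longrightarrow> canon (fst \<omega>) = fst \<omega> \<Longrightarrow> act Fa w \<omega> = (canon (w @ fst \<omega>), snd \<omega>)"
proof (induction w)
  case Nil then show ?case by simp
next
  case (Cons x w)
  then show ?case by (auto simp: Fa_def canon_cong3)
qed

lemma alpha_ne_t: "i \<in> I \<Longrightarrow> \<alpha> i \<noteq> t" and beta_ne_t: "i \<in> I \<Longrightarrow> \<beta> i \<noteq> t"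
  using ab_S0 t_notin by auto

lemma hnn_rel:
  assumes i: "i \<in> I" and v: "valid \<omega>"
  shows "act Fa [(t, True), (\<alpha> i, False), (t, False), (\<beta> i, True)] \<omega> = \<omega>"
proof -
  obtain h L where \<omega>: "\<omega> = (h, L)" by (cases \<omega>)
  have hc: "canon h = h" using v \<omega> by (simp add: valid_def)
  let ?h1 = "canon ((\<beta> i, True) # h)"
  have swF: "sw False = \<beta>" and swT: "sw True = \<alpha>" by (simp_all add: sw_def)
  have aI: "inSub \<alpha> [(\<alpha> i, False)]" using inSub_lift[of "[(i, False)]" \<alpha>] i by simp
  have rai: "rs [(\<alpha> i, False)] = [(i, False)]" using rho_a i by simp
  have A: "act Fa [(t, True), (\<alpha> i, False), (t, False), (\<beta> i, True)] \<omega>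
      = tact True (canon ((\<alpha> i, False) # fst (tact False (?h1, L))), snd (tact False (?h1, L)))"
    using \<omega> alpha_ne_t[OF i] beta_ne_t[OF i] by (simp add: Fa_def)
  have fin: "E ((\<beta> i, False) # ?h1) h"
    using word_eq_trans[OF E_Cons[OF word_eq_sym[OF E_canon]] E_cancel_2[of R0 "\<beta> i" False h]] by simp
  show ?thesis
  proof (cases "rep (sw False) ?h1 = one \<and> L \<noteq> [] \<and> fst (hd L) = (\<not> False)")
    case True
    then obtain g L' where L: "L = (True, g) # L'" by (cases L) auto
    have h1B: "inSub (sw False) ?h1" using True rep_one_iff by blast
    let ?a = "(\<alpha> i, False) # lift \<alpha> (rs ?h1)"
    let ?h2 = "canon ((\<alpha> i, False) # canon (lift (sw True) (rs ?h1) @ g))"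
    have t1: "tact False (?h1, L) = (canon (lift (sw True) (rs ?h1) @ g), L')"
      using tact_cancel[of False ?h1 L g L'] True L by simp
    have h2: "?h2 = canon (?a @ g)" by (simp add: canon_cong3 swT)
    have "inSub \<alpha> (lift \<alpha> (rs ?h1))" using inSub_swap(1)[OF h1B, of True] swT by simp
    then have aA: "inSub \<alpha> ?a" using inSub_app[OF aI] by fastforce
    have gA: "rep \<alpha> g = g" using v \<omega> L by (simp add: valid_def swT)
    have "rep (sw True) ?h2 = rep \<alpha> (canon (?a @ g))" using h2 swT by simp
    then have "rep (sw True) ?h2 = rep \<alpha> (?a @ g)" by (simp only: rep_canon_arg)
    then have rh2: "rep (sw True) ?h2 = g" using rep_mult[OF aA, of g] gA by simp
    have nc: "\<not> (g = one \<and> L' \<noteq> [] \<and> fst (hd L') = (\<not> True))"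
      using v \<omega> L by (cases L') (auto simp: valid_def)
    have t2: "tact True (?h2, L') = (canon (lift (sw False) (rs (?h2 @ inv_word g))), (True, g) # L')"
      using tact_nocancel[of True ?h2 L'] rh2 nc by simp
    have e1: "E (canon (?a @ g) @ inv_word g) ((?a @ g) @ inv_word g)"
      by (rule E_appr, rule word_eq_sym, rule E_canon)
    have e2: "E (?a @ g @ inv_word g) ?a" by (rule E_cancel_r2)
    have "E (?h2 @ inv_word g) ?a" unfolding h2 using word_eq_trans[OF e1] e2 by simp
    then have x1: "E (lift \<beta> (rs (?h2 @ inv_word g))) (lift \<beta> (rs ?a))" by (rule lrs_E)
    have x2: "lift \<beta> (rs ?a) = (\<beta> i, False) # lift (sw False) (rs (lift (sw True) (rs ?h1)))"
      using rho_a i swT swF by simp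
    have x3: "E ((\<beta> i, False) # lift (sw False) (rs (lift (sw True) (rs ?h1)))) ((\<beta> i, False) # ?h1)"
      by (rule E_Cons, rule back_lem[OF h1B])
    have "E (lift \<beta> (rs (?h2 @ inv_word g))) ((\<beta> i, False) # ?h1)"
      using word_eq_trans[OF x1[unfolded x2] x3] .
    then have "E (lift \<beta> (rs (?h2 @ inv_word g))) h" using fin by (rule word_eq_trans)
    then have "canon (lift \<beta> (rs (?h2 @ inv_word g))) = h" using hc canon_eq_iff[of _ h] canon_canon by simp
    then show ?thesis using A t1 t2 L swF \<omega> by simp
  next
    case False
    let ?r = "rep (sw False) ?h1"
    let ?h' = "canon (lift (sw True) (rs (?h1 @ inv_word ?r)))"
    have t1: "tact False (?h1, L) = (?h', (False, ?r) # L)" using tact_nocancel[OF False] by simp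
    have c: "inSub (sw False) (?h1 @ inv_word ?r)" by (rule rep_coset)
    have h'A: "inSub \<alpha> ?h'" using inSub_swap(1)[OF c, of True] inSub_canon swT by simp
    let ?h2 = "canon ((\<alpha> i, False) # ?h')"
    have "inSub \<alpha> ((\<alpha> i, False) # ?h')" using inSub_app[OF aI h'A] by simp
    then have "inSub (sw True) ?h2" using inSub_canon swT by simp
    then have "rep (sw True) ?h2 = one" using rep_one_iff by blast
    then have t2: "tact True (?h2, (False, ?r) # L) = (canon (lift (sw False) (rs ?h2) @ ?r), L)"
      using tact_cancel[of True ?h2 "(False, ?r) # L" ?r L] by simp
    have x1: "E (lift \<beta> (rs ?h2)) (lift \<beta> (rs ((\<alpha> i, False) # lift (sw True) (rs (?h1 @ inv_word ?r)))))"
      by (rule lrs_E, rule word_eq_sym, simp add: canon_cong3 E_canon)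
    have x2: "lift \<beta> (rs ((\<alpha> i, False) # lift (sw True) (rs (?h1 @ inv_word ?r))))
        = (\<beta> i, False) # lift (sw False) (rs (lift (sw True) (rs (?h1 @ inv_word ?r))))"
      using rho_a i swF by simp
    have x3: "E ((\<beta> i, False) # lift (sw False) (rs (lift (sw True) (rs (?h1 @ inv_word ?r)))))
        ((\<beta> i, False) # ?h1 @ inv_word ?r)"
      by (rule E_Cons, rule back_lem[OF c])
    have "E (lift \<beta> (rs ?h2)) ((\<beta> i, False) # ?h1 @ inv_word ?r)"
      using word_eq_trans[OF x1[unfolded x2] x3] .
    then have x4: "E (lift \<beta> (rs ?h2) @ ?r) (((\<beta> i, False) # ?h1 @ inv_word ?r) @ ?r)" by (rule E_appr)
    have x5: "E (((\<beta> i, False) # ?h1) @ inv_word ?r @ ?r) ((\<beta> i, False) # ?h1)"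
      by (rule E_cancel_r)
    have "E (lift \<beta> (rs ?h2) @ ?r) ((\<beta> i, False) # ?h1)"
      using word_eq_trans[OF x4] x5 by simp
    then have "E (lift \<beta> (rs ?h2) @ ?r) h" using fin word_eq_trans by blast
    then have "canon (lift \<beta> (rs ?h2) @ ?r) = h" using hc canon_eq_iff[of _ h] canon_canon by simp
    then show ?thesis using A t1 t2 swF \<omega> by simp
  qed
qed

lemma Fa_rel: "r \<in> R1 \<Longrightarrow> valid \<omega> \<Longrightarrow> act Fa r \<omega> = \<omega>"
proof -
  assume r: "r \<in> R1" and v: "valid \<omega>"
  show ?thesis
  proof (cases "r \<in> R0")
    case True
    have hc: "canon (fst \<omega>) = fst \<omega>" using v by (simp add: valid_def)
    have "canon (r @ fst \<omega>) = canon (fst \<omega>)" unfolding canon_eq_iff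
      using word_eq_rel[OF True, of "[]" "fst \<omega>"] by simp
    then show ?thesis using act_tfree[of r \<omega>] t_rel True hc by simp
  next
    case False
    then obtain i where "i \<in> I" "r = [(t, True), (\<alpha> i, False), (t, False), (\<beta> i, True)]"
      using r unfolding R1_def by blast
    then show ?thesis using hnn_rel v by simp
  qed
qed

lemma act_R1: "word_eq R1 u v \<Longrightarrow> valid \<omega> \<Longrightarrow> act Fa u \<omega> = act Fa v \<omega>"
  using act_word_eq[of valid Fa R1 u v, OF valid_Fa Fa_cancel Fa_rel] by blast

definition base where "base = (one, [])"

lemma valid_base: "valid base"
  by (simp add: base_def valid_def one_def)

end

context hnn begin

definition pinch :: "'a word \<Rightarrow> bool" where
  "pinch w \<longleftrightarrow> (\<exists>p c q e. w = p @ [(t, e)] @ c @ [(t, \<not> e)] @ q \<and> t \<notin> letters c \<and> inSub (sw e) c)"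

lemma pinch_Cons0: "pinch w \<Longrightarrow> pinch (x # w)"
proof -
  assume "pinch w"
  then obtain p c q e where "w = p @ [(t, e)] @ c @ [(t, \<not> e)] @ q \<and> t \<notin> letters c \<and> inSub (sw e) c"
    unfolding pinch_def by blast
  then show "pinch (x # w)" unfolding pinch_def by (intro exI[of _ "x # p"] exI[of _ c] exI[of _ q] exI[of _ e]) simp
qed

lemma pinch_Cons: "\<not> pinch (x # w) \<Longrightarrow> \<not> pinch w"
  by (erule contrapos_nn) (rule pinch_Cons0)

lemma valid_act: "valid \<omega> \<Longrightarrow> valid (act Fa w \<omega>)"
  by (rule act_valid[of valid Fa], rule valid_Fa)

lemma invariant:
  "\<not> pinch w \<Longrightarrow> length (snd (act Fa w base)) = tcount t w \<and>
     (\<forall>c e w'. w = c @ (t, e) # w' \<longrightarrow> t \<notin> letters c \<longrightarrow>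
        snd (act Fa w base) \<noteq> [] \<and> fst (hd (snd (act Fa w base))) = e \<and>
        inSub (sw (\<not> e)) (inv_word c @ fst (act Fa w base)))"
proof (induction w)
  case Nil
  then show ?case by (simp add: base_def)
next
  case (Cons x w0)
  have np0: "\<not> pinch w0" using Cons.prems by (rule pinch_Cons)
  obtain h0 L0 where hL: "act Fa w0 base = (h0, L0)" by (cases "act Fa w0 base")
  have IH: "length L0 = tcount t w0"
    "\<And>c e w'. w0 = c @ (t, e) # w' \<Longrightarrow> t \<notin> letters c \<Longrightarrow>
        L0 \<noteq> [] \<and> fst (hd L0) = e \<and> inSub (sw (\<not> e)) (inv_word c @ h0)"
  proof -
    have IH0: "length L0 = tcount t w0 \<and>
     (\<forall>c e w'. w0 = c @ (t, e) # w' \<longrightarrow> t \<notin> letters c \<longrightarrow>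
        L0 \<noteq> [] \<and> fst (hd L0) = e \<and> inSub (sw (\<not> e)) (inv_word c @ h0))"
      using Cons.IH[OF np0] unfolding hL fst_conv snd_conv .
    then show "length L0 = tcount t w0" by (rule conjunct1)
    fix c e w' assume "w0 = c @ (t, e) # w'" "t \<notin> letters c"
    then show "L0 \<noteq> [] \<and> fst (hd L0) = e \<and> inSub (sw (\<not> e)) (inv_word c @ h0)"
      using IH0 by blast
  qed
  obtain a b where x: "x = (a, b)" by (cases x)
  show ?case
  proof (cases "a = t")
    case False
    have act: "act Fa (x # w0) base = (canon (x # h0), L0)" using hL x False by (simp add: Fa_def)
    have P2: "L0 \<noteq> [] \<and> fst (hd L0) = e \<and> inSub (sw (\<not> e)) (inv_word c @ canon (x # h0))"
      if w: "x # w0 = c @ (t, e) # w'" and ct: "t \<notin> letters c" for c e w'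
    proof -
      obtain c0 where c: "c = x # c0" using w x False by (cases c) auto
      have w0: "w0 = c0 @ (t, e) # w'" "t \<notin> letters c0" using w c ct by auto
      note ih = IH(2)[OF w0]
      have f1: "E ((inv_word c0 @ [(a, \<not> b)]) @ canon ((a, b) # h0)) ((inv_word c0 @ [(a, \<not> b)]) @ (a, b) # h0)"
        by (rule E_appl, rule word_eq_sym, rule E_canon)
      have f2: "E ((inv_word c0 @ [(a, \<not> b)]) @ (a, b) # h0) (inv_word c0 @ h0)"
        using E_appl[OF E_cancel_2[of R0 a "\<not> b" h0], of "inv_word c0"] by simp
      have "E (inv_word c @ canon (x # h0)) (inv_word c0 @ h0)"
        using word_eq_trans[OF f1 f2] c x by simp
      then show ?thesis using ih inSub_E word_eq_sym by blast
    qed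
    show ?thesis
    proof (intro conjI allI impI)
      show "length (snd (act Fa (x # w0) base)) = tcount t (x # w0)" using act IH(1) x False by simp
    next
      fix c e w' assume A: "x # w0 = c @ (t, e) # w'" "t \<notin> letters c"
      note P = P2[OF A]
      show "snd (act Fa (x # w0) base) \<noteq> []" unfolding act fst_conv snd_conv using P by blast
      show "fst (hd (snd (act Fa (x # w0) base))) = e" unfolding act fst_conv snd_conv using P by blast
      show "inSub (sw (\<not> e)) (inv_word c @ fst (act Fa (x # w0) base))" unfolding act fst_conv snd_conv using P by blast
    qed
  next
    case True
    have act: "act Fa (x # w0) base = tact b (h0, L0)" using hL x True by (simp add: Fa_def)
    let ?r = "rep (sw b) h0"
    have nc: "\<not> (?r = one \<and> L0 \<noteq> [] \<and> fst (hd L0) = (\<not> b))"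
    proof
      assume a1: "?r = one \<and> L0 \<noteq> [] \<and> fst (hd L0) = (\<not> b)"
      then have "L0 \<noteq> []" by simp
      then have "tcount t w0 \<noteq> 0" using IH(1) by (metis length_0_conv)
      then have "t \<in> letters w0" using tcount_zero by metis
      then obtain c0 e w'' where w0: "w0 = c0 @ (t, e) # w''" "t \<notin> letters c0" using first_t by metis
      note ih = IH(2)[OF w0]
      have e: "e = (\<not> b)" using ih a1 by simp
      have h0X: "inSub (sw b) h0" using a1 rep_one_iff by blast
      have "inSub (sw b) (inv_word c0 @ h0)" using ih e by simp
      then have "inSub (sw b) (inv_word c0)" using inSub_cancel_r h0X by blast
      then have "inSub (sw b) c0" using inSub_inv by fastforce
      then have "pinch (x # w0)" unfolding pinch_def using x True w0 e
        by (intro exI[of _ "[]"] exI[of _ c0] exI[of _ w''] exI[of _ b]) simp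
      then show False using Cons.prems by simp
    qed
    let ?h = "canon (lift (sw (\<not> b)) (rs (h0 @ inv_word ?r)))"
    have act2: "act Fa (x # w0) base = (?h, (b, ?r) # L0)" using act tact_nocancel[OF nc] by simp
    have hin: "inSub (sw (\<not> b)) ?h" using inSub_swap(1)[OF rep_coset[of "sw b" h0]] inSub_canon by blast
    have P2: "(b, ?r) # L0 \<noteq> [] \<and> fst (hd ((b, ?r) # L0)) = e \<and> inSub (sw (\<not> e)) (inv_word c @ ?h)"
      if w: "x # w0 = c @ (t, e) # w'" and ct: "t \<notin> letters c" for c e w'
    proof -
      have "c = []" using w ct x True by (cases c) auto
      then have "e = b" using w x by simp
      then show ?thesis using hin \<open>c = []\<close> by simp
    qed
    show ?thesis
    proof (intro conjI allI impI)
      show "length (snd (act Fa (x # w0) base)) = tcount t (x # w0)" using act2 IH(1) x True by simp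
    next
      fix c e w' assume A: "x # w0 = c @ (t, e) # w'" "t \<notin> letters c"
      note P = P2[OF A]
      show "snd (act Fa (x # w0) base) \<noteq> []" unfolding act2 fst_conv snd_conv using P by blast
      show "fst (hd (snd (act Fa (x # w0) base))) = e" unfolding act2 fst_conv snd_conv using P by blast
      show "inSub (sw (\<not> e)) (inv_word c @ fst (act Fa (x # w0) base))" unfolding act2 fst_conv snd_conv using P by blast
    qed
  qed
qed

end

context hnn begin
lemma britton:
  assumes "word_eq R1 w u" "t \<notin> letters u" "t \<in> letters w"
  shows "pinch w"
proof (rule ccontr)
  assume np: "\<not> pinch w"
  have "act Fa w base = act Fa u base" by (rule act_R1[OF assms(1) valid_base])
  moreover have "act Fa u base = (canon (u @ one), [])"
    using act_tfree[OF assms(2), of base] by (simp add: base_def one_def)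
  ultimately have "length (snd (act Fa w base)) = 0" by simp
  then have "tcount t w = 0" using invariant[OF np] by simp
  then show False using assms(3) tcount_zero by metis
qed

lemma inj_lemma:
  assumes "word_eq R1 w u" "t \<notin> letters u" "t \<notin> letters w"
  shows "E w u"
proof -
  have "act Fa w base = act Fa u base" by (rule act_R1[OF assms(1) valid_base])
  then have "canon (w @ one) = canon (u @ one)"
    using act_tfree[OF assms(2), of base] act_tfree[OF assms(3), of base] by (simp add: base_def one_def)
  then have "canon w = canon u" unfolding one_def canon_cong1 by simp
  then show ?thesis using canon_eq_iff by blast
qed

end

context hnn begin
lemma conj_single:
  assumes i: "i \<in> I"
  shows "word_eq R1 [(t, True), (\<alpha> i, False), (t, False)] [(\<beta> i, False)]"
proof -
  have r: "[(t, True), (\<alpha> i, False), (t, False), (\<beta> i, True)] \<in> R1" unfolding R1_def using i by blast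
  have f1: "word_eq R1 [(t, True), (\<alpha> i, False), (t, False), (\<beta> i, True), (\<beta> i, False)] [(\<beta> i, False)]"
    using word_eq_rel[OF r, of "[]" "[(\<beta> i, False)]"] by simp
  have f2: "word_eq R1 [(t, True), (\<alpha> i, False), (t, False), (\<beta> i, True), (\<beta> i, False)]
     [(t, True), (\<alpha> i, False), (t, False)]"
    using word_eq_cancel[of R1 "[(t, True), (\<alpha> i, False), (t, False)]" "\<beta> i" True "[]"] by simp
  show ?thesis by (rule word_eq_trans[OF word_eq_sym[OF f2] f1])
qed

lemma conj_alpha:
  assumes "letters W \<subseteq> I"
  shows "word_eq R1 ([(t, True)] @ lift \<alpha> W @ [(t, False)]) (lift \<beta> W)"
  using assms
proof (induction W)
  case Nil
  show ?case using word_eq_cancel[of R1 "[]" t True "[]"] by simp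
next
  case (Cons x W)
  obtain i b where x: "x = (i, b)" by (cases x)
  have i: "i \<in> I" and WI: "letters W \<subseteq> I" using Cons.prems x by auto
  have one: "word_eq R1 [(t, True), (\<alpha> i, b), (t, False)] [(\<beta> i, b)]"
  proof (cases b)
    case False then show ?thesis using conj_single[OF i] by simp
  next
    case True
    have "word_eq R1 (inv_word [(t, True), (\<alpha> i, False), (t, False)]) (inv_word [(\<beta> i, False)])"
      by (rule word_eq_inv, rule conj_single[OF i])
    then show ?thesis using True by simp
  qed
  have c1: "word_eq R1 ([(t, True), (\<alpha> i, b), (t, False)] @ ([(t, True)] @ lift \<alpha> W @ [(t, False)]))
     ([(t, True)] @ lift \<alpha> (x # W) @ [(t, False)])"
    using word_eq_cancel[of R1 "[(t, True), (\<alpha> i, b)]" t False "lift \<alpha> W @ [(t, False)]"] x by simp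
  have s1: "word_eq R1 ([(t, True)] @ lift \<alpha> (x # W) @ [(t, False)])
      ([(t, True), (\<alpha> i, b), (t, False)] @ ([(t, True)] @ lift \<alpha> W @ [(t, False)]))"
    by (rule word_eq_sym[OF c1])
  have s2: "word_eq R1 ([(t, True), (\<alpha> i, b), (t, False)] @ ([(t, True)] @ lift \<alpha> W @ [(t, False)]))
      ([(\<beta> i, b)] @ lift \<beta> W)"
    by (rule word_eq_app[OF one Cons.IH[OF WI]])
  show ?case using word_eq_trans[OF s1 s2] x by simp
qed

lemma conj_gen:
  assumes "letters W \<subseteq> I"
  shows "word_eq R1 ([(t, e)] @ lift (sw e) W @ [(t, \<not> e)]) (lift (sw (\<not> e)) W)"
proof (cases e)
  case True
  then show ?thesis using conj_alpha[OF assms] by (simp add: sw_def)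
next
  case False
  have F1: "word_eq R1 ((t, False) # (t, True) # lift \<alpha> W @ [(t, False), (t, True)]) ((t, False) # lift \<beta> W @ [(t, True)])"
    using word_eq_cong[OF conj_alpha[OF assms], of "[(t, False)]" "[(t, True)]"] by simp
  have F2: "word_eq R1 ((t, False) # (t, True) # lift \<alpha> W @ [(t, False), (t, True)]) (lift \<alpha> W @ [(t, False), (t, True)])"
    using word_eq_cancel[of R1 "[]" t False "lift \<alpha> W @ [(t, False), (t, True)]"] by simp
  have F3: "word_eq R1 (lift \<alpha> W @ [(t, False), (t, True)]) (lift \<alpha> W)"
    using word_eq_cancel[of R1 "lift \<alpha> W" t False "[]"] by simp
  have "word_eq R1 ([(t, False)] @ lift \<beta> W @ [(t, True)]) (lift \<alpha> W)"
    using word_eq_trans[OF word_eq_trans[OF word_eq_sym[OF F1] F2] F3] by simp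
  then show ?thesis using False by (simp add: sw_def)
qed

end

context hnn begin
lemma rs_S0: "letters c \<subseteq> S0 \<Longrightarrow> letters (rs c) \<subseteq> I \<and> length (rs c) \<le> length c"
proof (induction c)
  case Nil then show ?case by simp
next
  case (Cons x c)
  obtain a b where x: "x = (a, b)" by (cases x)
  have a: "a \<in> S0" using Cons.prems x by simp
  then show ?case using Cons x rho_S0 by auto
qed

lemma R0_R1: "R0 \<subseteq> R1" unfolding R1_def by blast

theorem hnn_main:
  "letters w \<subseteq> insert t S0 \<Longrightarrow> letters u \<subseteq> S0 \<Longrightarrow> word_eq R1 w u \<Longrightarrow>
    \<exists>w'. letters w' \<subseteq> S0 \<and> length w' \<le> length w \<and> E w' u"
proof (induction "tcount t w" arbitrary: w rule: less_induct)
  case less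
  have tu: "t \<notin> letters u" using less.prems(2) t_notin by blast
  show ?case
  proof (cases "t \<in> letters w")
    case False
    have "E w u" by (rule inj_lemma[OF less.prems(3) tu False])
    then show ?thesis using less.prems(1) False by (intro exI[of _ w]) auto
  next
    case True
    have "pinch w" by (rule britton[OF less.prems(3) tu True])
    then obtain p c q e where w: "w = p @ [(t, e)] @ c @ [(t, \<not> e)] @ q" and ct: "t \<notin> letters c"
      and cX: "inSub (sw e) c" unfolding pinch_def by blast
    have "letters c \<subseteq> letters w" using w by auto
    then have cS: "letters c \<subseteq> S0" using less.prems(1) ct by blast
    obtain W where W: "letters W \<subseteq> I" "E c (lift (sw e) W)" using cX unfolding inSub_def by blast
    let ?c' = "lift (sw (\<not> e)) (rs c)"
    have rc: "letters (rs c) \<subseteq> I" "length (rs c) \<le> length c" using rs_S0[OF cS] by auto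
    have c'S: "letters ?c' \<subseteq> S0" using rc(1) ab_S0 unfolding letters_lift sw_def by (cases e) auto
    have c'len: "length ?c' \<le> length c" using rc(2) by simp
    have e1: "word_eq R1 ([(t, e)] @ c @ [(t, \<not> e)]) ([(t, e)] @ lift (sw e) W @ [(t, \<not> e)])"
      by (rule word_eq_cong, rule word_eq_mono[OF R0_R1 W(2)])
    have e2: "word_eq R1 (lift (sw (\<not> e)) W) ?c'"
      by (rule word_eq_mono[OF R0_R1], rule word_eq_sym, rule swap_lemma[OF W(2) W(1)])
    have e3: "word_eq R1 ([(t, e)] @ c @ [(t, \<not> e)]) ?c'"
      using word_eq_trans[OF word_eq_trans[OF e1 conj_gen[OF W(1)]] e2] .
    let ?w1 = "p @ ?c' @ q"
    have "word_eq R1 (p @ ([(t, e)] @ c @ [(t, \<not> e)]) @ q) ?w1" by (rule word_eq_cong[OF e3])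
    then have "word_eq R1 w ?w1" using w by simp
    then have ew1: "word_eq R1 ?w1 u" by (rule word_eq_trans[OF word_eq_sym less.prems(3)])
    have tc': "tcount t ?c' = 0" unfolding tcount_zero using c'S t_notin by blast
    have lt: "tcount t ?w1 < tcount t w" using w tc' by simp
    have lw1: "letters ?w1 \<subseteq> insert t S0" using less.prems(1) w c'S by auto
    obtain w' where w': "letters w' \<subseteq> S0" "length w' \<le> length ?w1" "E w' u"
      using less.hyps[OF lt lw1 less.prems(2) ew1] by blast
    have "length ?w1 \<le> length w" using w c'len by simp
    then show ?thesis using w' by (intro exI[of _ w']) auto
  qed
qed

end

context hnn begin

theorem hnn_dist:
  assumes u: "letters u \<subseteq> S0" and v: "letters v \<subseteq> S0"
  shows "word_dist S0 R0 u v = word_dist (insert t S0) R1 u v"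
proof -
  let ?g = "inv_word u @ v"
  define P0 where "P0 n = (\<exists>w. letters w \<subseteq> S0 \<and> length w = n \<and> word_eq R0 w ?g)" for n
  define P1 where "P1 n = (\<exists>w. letters w \<subseteq> insert t S0 \<and> length w = n \<and> word_eq R1 w ?g)" for n
  have d0: "word_dist S0 R0 u v = Least P0" unfolding word_dist_def P0_def ..
  have d1: "word_dist (insert t S0) R1 u v = Least P1" unfolding word_dist_def P1_def ..
  have p0: "P0 (length ?g)" unfolding P0_def using u v by (intro exI[of _ ?g]) auto
  have P0D: "P0 (Least P0)" by (rule LeastI[of P0, OF p0])
  have "P1 (Least P0)" using P0D unfolding P0_def P1_def
    using word_eq_mono[OF R0_R1] by blast
  then have le1: "Least P1 \<le> Least P0" by (rule Least_le)
  have "P1 (length ?g)" unfolding P1_def using u v word_eq_refl by (intro exI[of _ ?g]) auto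
  then have "P1 (Least P1)" by (rule LeastI)
  then obtain w where w: "letters w \<subseteq> insert t S0" "length w = Least P1" "word_eq R1 w ?g"
    unfolding P1_def by blast
  have gS: "letters ?g \<subseteq> S0" using u v by auto
  obtain w' where w': "letters w' \<subseteq> S0" "length w' \<le> length w" "word_eq R0 w' ?g"
    using hnn_main[OF w(1) gS w(3)] by blast
  have "P0 (length w')" unfolding P0_def using w' by blast
  then have "Least P0 \<le> length w'" by (rule Least_le)
  then have "Least P0 \<le> Least P1" using w' w by simp
  then show ?thesis using le1 d0 d1 by simp
qed

end

lemma sg_gens0: "Sg j \<notin> gens0 T p"
  by (auto simp: gens0_def)

lemma gensG_Sg: "1 \<le> n \<Longrightarrow> Sg j \<in> gensG T p n \<longleftrightarrow> 1 \<le> j \<and> j \<le> n"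
proof (induction n rule: nat_induct_at_least)
  case base then show ?case by (auto simp: sg_gens0)
next
  case (Suc n)
  then obtain k where "n = Suc k" by (cases n) auto
  then show ?case using Suc by auto
qed

lemma gensG_Suc: "1 \<le> n \<Longrightarrow> gensG T p (Suc n) = insert (Sg (Suc n)) (gensG T p n)"
  by (cases n) auto

lemma letters_comm[simp]: "letters (comm a b) = {a, b}"
  by (auto simp: comm_def pos_def ngt_def)

lemma letters_map_Tg: "letters (map (\<lambda>(t, e). (Tg t, e)) r) = Tg ` letters r"
  by (induction r) auto

lemma rels1_Sg: "r \<in> rels1 T RH p d \<Longrightarrow> Sg j \<in> letters r \<Longrightarrow> j = 1"
  unfolding rels1_def
  by (auto simp: letters_map_Tg pos_def ngt_def sg_gens0)

lemma relsG_Sg: "1 \<le> n \<Longrightarrow> r \<in> relsG T RH p d n \<Longrightarrow> Sg j \<in> letters r \<Longrightarrow> j \<le> n"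
proof (induction n arbitrary: r rule: nat_induct_at_least)
  case base then show ?case using rels1_Sg by fastforce
next
  case (Suc n)
  obtain k where n: "n = Suc k" using Suc.hyps by (cases n) auto
  show ?case
  proof (cases k)
    case 0
    then show ?thesis using Suc n by (auto simp: pos_def ngt_def dest!: rels1_Sg)
  next
    case (Suc k')
    let ?rr = "[ngt (Sg (Suc (Suc (Suc k')))), pos (Sg 1), pos (Sg (Suc (Suc (Suc k')))), ngt (Sg (Suc (Suc k')))]"
    have "r \<in> relsG T RH p d n \<or> r = ?rr" using Suc.prems(1) n Suc by auto
    then show ?thesis
    proof
      assume "r \<in> relsG T RH p d n"
      then have "j \<le> n" using Suc.IH Suc.prems(2) by blast
      then show ?thesis by simp
    next
      assume "r = ?rr"
      then show ?thesis using Suc.prems(2) n Suc by (auto simp: pos_def ngt_def)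
    qed
  qed
qed

lemma comm_triv: "u = [] \<or> v = [] \<Longrightarrow> word_eq R (u @ v @ inv_word u @ inv_word v) []"
  using word_eq_right_inv by auto

lemma subst_comm: "subst f (comm a b) = f a @ f b @ inv_word (f a) @ inv_word (f b)"
  by (simp add: comm_def pos_def ngt_def)

lemma subst_map_Tg: "(\<forall>x. f (Tg x) = []) \<Longrightarrow> subst f (map (\<lambda>(t, e). (Tg t, e)) r) = []"
  by (induction r) auto

text \<open>Case m = 2\<close>

fun rho2 :: "'t gen \<Rightarrow> nat word" where
  "rho2 (Zg i) = [(i, False)]"
| "rho2 (Ag i) = [(i, False)]"
| "rho2 (Bg i) = [(i, False)]"
| "rho2 _ = []"

lemma subst_rho2_Tg: "subst rho2 (map (\<lambda>(t, e). (Tg t, e)) r) = []"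
  by (induction r) auto

lemma fc1: "word_eq R [(i, False), (i, True)] []"
  using word_eq_cancel[of R "[]" i False "[]"] by simp
lemma fc2: "word_eq R [(i, True), (i, False)] []"
  using word_eq_cancel[of R "[]" i True "[]"] by simp

lemma free_cancel1: "word_eq {} [(i, e), (i, \<not> e)] []"
  using word_eq_cancel[of "{}" "[]" i e "[]"] by simp

lemma rho2_rel: "\<forall>r\<in>rels1 T RH p d. word_eq {} (subst rho2 r) []"
proof
  fix r assume r: "r \<in> rels1 T RH p d"
  have g0: "\<And>g. g \<in> gens0 T p \<Longrightarrow> rho2 g = [] \<or> (\<exists>i. rho2 g = [(i, False)])"
    by (auto simp: gens0_def)
  show "word_eq {} (subst rho2 r) []"
    using r unfolding rels1_def
  proof (elim UnE)
    assume "r \<in> map (\<lambda>(t, e). (Tg t, e)) ` RH"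
    then show ?thesis by (auto simp: subst_rho2_Tg)
  next
    assume "r \<in> {comm (Xg i) (Yg j) | i j. i < p \<and> j < p}"
    then show ?thesis by (auto simp: subst_comm)
  next
    assume "r \<in> {comm (Xg i) (Zg j) | i j. i < p \<and> j < p}"
    then show ?thesis by (auto simp: subst_comm comm_triv fc1 fc2)
  next
    assume "r \<in> {comm (Yg i) (Zg j) | i j. i < p \<and> j < p}"
    then show ?thesis by (auto simp: subst_comm comm_triv fc1 fc2)
  next
    assume "r \<in> {[pos (Tg (d i)), pos (Yg i), ngt (Xg i)] | i. i < p}"
    then show ?thesis by (auto simp: pos_def ngt_def)
  next
    assume "r \<in> {[pos (Ag i), ngt (Zg i), ngt (Xg i)] | i. i < p}"
    then show ?thesis by (auto simp: pos_def ngt_def fc1 fc2)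
  next
    assume "r \<in> {[pos (Bg i), ngt (Zg i), ngt (Yg i)] | i. i < p}"
    then show ?thesis by (auto simp: pos_def ngt_def fc1 fc2)
  next
    assume "r \<in> {comm (Sg 1) g | g. g \<in> gens0 T p}"
    then obtain g where "r = comm (Sg 1) g" by blast
    then show ?thesis using word_eq_right_inv[of "{}" "rho2 g"] by (simp add: subst_comm)
  qed
qed

lemma hnn2: "hnn (relsG T RH p d 1) (gensG T p 1) (Sg 2) {..<p} Ag Bg rho2"
proof
  show "Sg 2 \<notin> gensG T p 1" using gensG_Sg[of 1 2 T p] by simp
  show "\<forall>r\<in>relsG T RH p d 1. Sg 2 \<notin> letters r"
    using relsG_Sg[of 1 _ T RH p d 2] by auto
  show "\<forall>i\<in>{..<p}. Ag i \<in> gensG T p 1 \<and> Bg i \<in> gensG T p 1" by (auto simp: gens0_def)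
  show "\<forall>i\<in>{..<p}. rho2 (Ag i) = [(i, False)]" by simp
  show "\<forall>i\<in>{..<p}. rho2 (Bg i) = [(i, False)]" by simp
  show "\<forall>r\<in>relsG T RH p d 1. word_eq {} (subst rho2 r) []" using rho2_rel by simp
  show "\<forall>x\<in>gensG T p 1. length (rho2 x) \<le> 1 \<and> letters (rho2 x) \<subseteq> {..<p}"
    by (auto simp: gens0_def)
qed

lemma R1_2: "hnn.R1 (relsG T RH p d 1) (Sg 2) {..<p} Ag Bg = relsG T RH p d 2"
  unfolding hnn.R1_def[OF hnn2] by (simp add: numeral_2_eq_2 pos_def ngt_def)

text \<open>Case m \<ge> 3\<close>

fun rho3 :: "'t gen \<Rightarrow> nat word" where
  "rho3 (Sg j) = [(0, False)]"
| "rho3 _ = []"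

lemma subst_rho3_Tg: "subst rho3 (map (\<lambda>(t, e). (Tg t, e)) r) = []"
  by (induction r) auto

lemma rho3_rel: "1 \<le> n \<Longrightarrow> \<forall>r\<in>relsG T RH p d n. word_eq {} (subst rho3 r) []"
proof (induction n rule: nat_induct_at_least)
  case base
  show ?case
  proof
    fix r assume r: "r \<in> relsG T RH p d 1"
    have g0: "\<And>g. g \<in> gens0 T p \<Longrightarrow> rho3 g = []"
      by (auto simp: gens0_def)
    have "r \<in> rels1 T RH p d" using r by simp
    then show "word_eq {} (subst rho3 r) []"
      unfolding rels1_def
    proof (elim UnE)
      assume "r \<in> map (\<lambda>(t, e). (Tg t, e)) ` RH"
      then show ?thesis by (auto simp: subst_rho3_Tg)
    next
      assume "r \<in> {comm (Sg 1) g | g. g \<in> gens0 T p}"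
      then obtain g where "r = comm (Sg 1) g" "g \<in> gens0 T p" by blast
      then show ?thesis using g0 fc1[of "{}" "0::nat"] by (simp add: subst_comm)
    qed (auto simp: subst_comm pos_def ngt_def)
  qed
next
  case (Suc n)
  obtain k where n: "n = Suc k" using Suc.hyps by (cases n) auto
  have c1: "word_eq {} [(0::nat, True), (0, False), (0, False), (0, True)] [(0, False), (0, True)]"
    using word_eq_cancel[of "{}" "[]" "0::nat" True "[(0, False), (0, True)]"] by simp
  have c: "word_eq {} [(0::nat, True), (0, False), (0, False), (0, True)] []"
    by (rule word_eq_trans[OF c1 fc1])
  show ?case
  proof (cases k)
    case 0
    then show ?thesis using Suc n c by (auto simp: pos_def ngt_def fc2)
  next
    case (Suc k')
    then show ?thesis using Suc.IH n c by (auto simp: pos_def ngt_def)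
  qed
qed

lemma hnn3:
  "hnn (relsG T RH p d (Suc (Suc k))) (gensG T p (Suc (Suc k))) (Sg (Suc (Suc (Suc k)))) {0}
     (\<lambda>_. Sg 1) (\<lambda>_. Sg (Suc (Suc k))) rho3"
proof
  let ?n = "Suc (Suc k)"
  have n1: "1 \<le> ?n" by simp
  show "Sg (Suc ?n) \<notin> gensG T p ?n" using gensG_Sg[OF n1, of "Suc ?n" T p] by simp
  show "\<forall>r\<in>relsG T RH p d ?n. Sg (Suc ?n) \<notin> letters r"
    using relsG_Sg[OF n1, of _ T RH p d "Suc ?n"] by auto
  show "\<forall>i\<in>{0}. Sg 1 \<in> gensG T p ?n \<and> Sg ?n \<in> gensG T p ?n"
    using gensG_Sg[OF n1, of _ T p] n1 by auto
  show "\<forall>i\<in>{0::nat}. rho3 (Sg 1) = [(i, False)]" by simp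
  show "\<forall>i\<in>{0::nat}. rho3 (Sg ?n) = [(i, False)]" by simp
  show "\<forall>r\<in>relsG T RH p d ?n. word_eq {} (subst rho3 r) []" by (rule rho3_rel[OF n1])
  show "\<forall>x\<in>gensG T p ?n. length (rho3 x) \<le> 1 \<and> letters (rho3 x) \<subseteq> {0}"
  proof
    fix x :: "'a gen" show "length (rho3 x) \<le> 1 \<and> letters (rho3 x) \<subseteq> {0}" by (cases x) auto
  qed
qed

lemma R1_3:
  "hnn.R1 (relsG T RH p d (Suc (Suc k))) (Sg (Suc (Suc (Suc k)))) {0::nat} (\<lambda>_. Sg 1) (\<lambda>_. Sg (Suc (Suc k)))
    = relsG T RH p d (Suc (Suc (Suc k)))"
  unfolding hnn.R1_def[OF hnn3] by (simp add: pos_def ngt_def)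

theorem lemma3p3:
  fixes T :: "'t set" and RH :: "'t word set" and p :: nat and d :: "nat \<Rightarrow> 't"
    and m :: nat and u v :: "'t gen word"
  assumes "finite T" and "finite RH" and "\<forall>r\<in>RH. letters r \<subseteq> T"
    and "\<forall>i<p. d i \<in> T" and "free_basis RH p d"
    and "2 \<le> m"
    and "letters u \<subseteq> gensG T p (m - 1)" and "letters v \<subseteq> gensG T p (m - 1)"
  shows "word_dist (gensG T p (m - 1)) (relsG T RH p d (m - 1)) u v
       = word_dist (gensG T p m) (relsG T RH p d m) u v"
proof -
  obtain n where m: "m = Suc n" and n1: "1 \<le> n" using assms(6) by (cases m) auto
  have mm: "m - 1 = n" using m by simp
  have gS: "gensG T p m = insert (Sg m) (gensG T p n)" using gensG_Suc[OF n1, of T p] m by simp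
  have u: "letters u \<subseteq> gensG T p n" and v: "letters v \<subseteq> gensG T p n" using assms(7,8) mm by auto
  show ?thesis
  proof (cases "n = 1")
    case True
    then have m2: "m = 2" using m by simp
    have "word_dist (gensG T p 1) (relsG T RH p d 1) u v
        = word_dist (insert (Sg 2) (gensG T p 1)) (hnn.R1 (relsG T RH p d 1) (Sg 2) {..<p} Ag Bg) u v"
      by (rule hnn.hnn_dist[OF hnn2]) (use u v True in auto)
    then show ?thesis using R1_2[of T RH p d] gS m2 mm True by simp
  next
    case False
    then obtain k where n: "n = Suc (Suc k)" using n1 by (cases n; cases "n - 1") auto
    have "word_dist (gensG T p (Suc (Suc k))) (relsG T RH p d (Suc (Suc k))) u v
        = word_dist (insert (Sg (Suc (Suc (Suc k)))) (gensG T p (Suc (Suc k))))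
            (hnn.R1 (relsG T RH p d (Suc (Suc k))) (Sg (Suc (Suc (Suc k)))) {0::nat} (\<lambda>_. Sg 1) (\<lambda>_. Sg (Suc (Suc k)))) u v"
      by (rule hnn.hnn_dist[OF hnn3]) (use u v n in auto)
    then show ?thesis using R1_3[of T RH p d k] gS m mm n by simp
  qed
qed

end
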